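(* Let $(S,T,F,M_0,\ell)$ be a Petri net, $T_+\subseteq T$ a set of transitions such that $F\restriction(S\cup T_+)$ is acyclic, and $S_+\subseteq S$ a set of places. Let $\bar M\in\mathbb N^{S_+}$ and let $H$ be a finite multiset in $\mathbb N^{T_+}$ such that $\bar M+[\![H]\!]\in\mathbb N^S$. Then (a) for any faithful place $s$ w.r.t. $T_+$ and $S_+$, $(\bar M+[\![H]\!])(s)\cdot{}^*s\le\bar M$; (b) for any $k\in\mathbb N$ and any transition $t$ with $(\bar M+[\![H]\!])[k\cdot\{t\}\rangle$, we have $k\cdot{}^*t\le\bar M$.
   Context: A Petri net $(S,T,F,M_0,\ell)$ has disjoint $S,T$ and $F:(S\times T)\cup(T\times S)\to\mathbb N$. ${}^\bullet x(y)=F(y,x)$, $x^\bullet(y)=F(x,y)$, extended additively to finite multisets $H$ of transitions; $[\![H]\!]=H^\bullet-{}^\bullet H$ (a signed multiset of places; multisets over $S_+$ are identified with multisets over $S$ that vanish outside $S_+$). $M[G\rangle$ iff ${}^\bullet G\le M$. $F\restriction(S\cup T_+)$ is acyclic iff there is no nonempty path $x_0x_1\cdots x_n$ with $x_0=x_n$, all $x_i\in S\cup T_+$ and $F(x_i,x_{i+1})>0$. A path is a sequence $\pi=x_0x_1\cdots x_n$ of places and transitions with $F(x_i,x_{i+1})>0$ for $0\le i<n$; its arc weight is $F(\pi)=\prod_{i=0}^{n-1}F(x_i,x_{i+1})$. A place $s$ is faithful w.r.t. $T_+$ and $S_+$ iff $|\{s\}\cap S_+|+\sum_{t\in T_+}F(t,s)=1$.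 A path from $x_0$ to $x_n$ is faithful iff every $x_i$ with $0\le i<n$ is either a transition in $T_+$ or a faithful place. For $x\in S\cup T$, ${}^*x\in(\mathbb N\cup\{\infty\})^{S_+}$ is given by ${}^*x(s)=\sup\{F(\pi)\mid\pi$ a faithful path from $s\in S_+$ to $x\}$ (0 if no such path); scalar multiplication uses the convention $0\cdot\infty=0$. *)

theory Defs
  imports Main "HOL-Library.Multiset" "HOL-Library.Extended_Nat"
begin

(* A Petri net is given by a type of places 's, a type of transitions 't
(so S = UNIV and T = UNIV, automatically disjoint), and the flow relation F split into
  pre s t = F(s,t)  and  post t s = F(t,s).
The initial marking and the labelling play no role in the statement. *)

fun flow :: "('s \<Rightarrow> 't \<Rightarrow> nat) \<Rightarrow> ('t \<Rightarrow> 's \<Rightarrow> nat)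
              \<Rightarrow> ('s + 't) \<Rightarrow> ('s + 't) \<Rightarrow> nat" where
  "flow pre post (Inl s) (Inr t) = pre s t"
| "flow pre post (Inr t) (Inl s) = post t s"
| "flow pre post _ _ = 0"

definition preset_ms :: "('s \<Rightarrow> 't \<Rightarrow> nat) \<Rightarrow> 't multiset \<Rightarrow> 's \<Rightarrow> nat" where
  "preset_ms pre G s = (\<Sum>t\<in>#G. pre s t)"

definition postset_ms :: "('t \<Rightarrow> 's \<Rightarrow> nat) \<Rightarrow> 't multiset \<Rightarrow> 's \<Rightarrow> nat" where
  "postset_ms post G s = (\<Sum>t\<in>#G. post t s)"

definition effect :: "('s \<Rightarrow> 't \<Rightarrow> nat) \<Rightarrow> ('t \<Rightarrow> 's \<Rightarrow> nat) \<Rightarrow> 't multiset \<Rightarrow> 's \<Rightarrow> int" where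
  "effect pre post H s = int (postset_ms post H s) - int (preset_ms pre H s)"

definition enabled :: "('s \<Rightarrow> 't \<Rightarrow> nat) \<Rightarrow> ('s \<Rightarrow> nat) \<Rightarrow> 't multiset \<Rightarrow> bool" where
  "enabled pre M G \<longleftrightarrow> (\<forall>s. preset_ms pre G s \<le> M s)"

definition acyclic_on :: "('s \<Rightarrow> 't \<Rightarrow> nat) \<Rightarrow> ('t \<Rightarrow> 's \<Rightarrow> nat) \<Rightarrow> 't set \<Rightarrow> bool" where
  "acyclic_on pre post Tp \<longleftrightarrow>
     acyclic {(x, y). x \<in> range Inl \<union> Inr ` Tp \<and> y \<in> range Inl \<union> Inr ` Tp
                      \<and> flow pre post x y > 0}"

(* Faithful place: |{s} \<inter> S+| + \<Sum>_{t\<in>T+} F(t,s) = 1 (the possibly infinite sum of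
naturals is written as a finite sum over its support, which must be finite). *)
definition faithful :: "('t \<Rightarrow> 's \<Rightarrow> nat) \<Rightarrow> 't set \<Rightarrow> 's set \<Rightarrow> 's \<Rightarrow> bool" where
  "faithful post Tp Sp s \<longleftrightarrow>
     finite {t\<in>Tp. post t s \<noteq> 0} \<and>
     (if s \<in> Sp then 1 else 0) + (\<Sum>t\<in>{t\<in>Tp. post t s \<noteq> 0}. post t s) = (1::nat)"

definition is_path :: "('s + 't \<Rightarrow> 's + 't \<Rightarrow> nat) \<Rightarrow> ('s + 't) list \<Rightarrow> bool" where
  "is_path F xs \<longleftrightarrow> xs \<noteq> [] \<and> (\<forall>i < length xs - 1. F (xs ! i) (xs ! Suc i) > 0)"

definition path_weight :: "('s + 't \<Rightarrow> 's + 't \<Rightarrow> nat) \<Rightarrow> ('s + 't) list \<Rightarrow> nat" where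
  "path_weight F xs = (\<Prod>i < length xs - 1. F (xs ! i) (xs ! Suc i))"

definition faithful_path ::
  "('s \<Rightarrow> 't \<Rightarrow> nat) \<Rightarrow> ('t \<Rightarrow> 's \<Rightarrow> nat) \<Rightarrow> 't set \<Rightarrow> 's set
     \<Rightarrow> ('s + 't) list \<Rightarrow> ('s + 't) \<Rightarrow> ('s + 't) \<Rightarrow> bool" where
  "faithful_path pre post Tp Sp xs a b \<longleftrightarrow>
     is_path (flow pre post) xs \<and> hd xs = a \<and> last xs = b \<and>
     (\<forall>i < length xs - 1. (case xs ! i of Inl s \<Rightarrow> faithful post Tp Sp s | Inr t \<Rightarrow> t \<in> Tp))"

(* *x(s) = sup of arc weights of faithful paths from s \<in> S+ to x (0 if none; Sup {} = 0
in enat; outside S+ it is 0, identifying vectors over S+ with vectors over S). *)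
definition star :: "('s \<Rightarrow> 't \<Rightarrow> nat) \<Rightarrow> ('t \<Rightarrow> 's \<Rightarrow> nat) \<Rightarrow> 't set \<Rightarrow> 's set
                    \<Rightarrow> ('s + 't) \<Rightarrow> 's \<Rightarrow> enat" where
  "star pre post Tp Sp x s =
     Sup {enat (path_weight (flow pre post) xs) | xs.
            s \<in> Sp \<and> faithful_path pre post Tp Sp xs (Inl s) x}"

end

theory Submission
  imports Defs
begin

lemma all_less_Suc_split: "(\<forall>i<Suc n. Q i) \<longleftrightarrow> (\<forall>i<n. Q i) \<and> Q n"
  by (auto simp: less_Suc_eq)

lemma is_path_snoc:
  assumes "xs \<noteq> []"
  shows "is_path F (xs @ [y]) \<longleftrightarrow> is_path F xs \<and> F (last xs) y > 0"
proof -
  obtain n where n: "length xs = Suc n" using assms by (cases xs) auto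
  have "(\<forall>i < Suc n. F ((xs@[y]) ! i) ((xs@[y]) ! Suc i) > 0) \<longleftrightarrow>
        (\<forall>i < n. F (xs ! i) (xs ! Suc i) > 0) \<and> F (xs ! n) y > 0"
    using n by (simp only: all_less_Suc_split) (simp add: nth_append)
  moreover have "last xs = xs ! n" using n assms by (simp add: last_conv_nth)
  ultimately show ?thesis using assms n unfolding is_path_def by simp
qed

lemma path_weight_snoc:
  assumes "xs \<noteq> []"
  shows "path_weight F (xs @ [y]) = path_weight F xs * F (last xs) y"
proof -
  obtain n where n: "length xs = Suc n" using assms by (cases xs) auto
  have "path_weight F (xs @ [y]) = (\<Prod>i < Suc n. F ((xs@[y]) ! i) ((xs@[y]) ! Suc i))"
    unfolding path_weight_def using n by simp
  also have "\<dots> = (\<Prod>i < n. F (xs ! i) (xs ! Suc i)) * F (xs ! n) y"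
    using n by (simp add: nth_append)
  also have "\<dots> = path_weight F xs * F (last xs) y"
    unfolding path_weight_def using n assms by (simp add: last_conv_nth)
  finally show ?thesis .
qed

lemma faithful_path_snoc:
  assumes "xs \<noteq> []"
  shows "faithful_path pre post Tp Sp (xs @ [y]) a b \<longleftrightarrow>
     faithful_path pre post Tp Sp xs a (last xs) \<and> flow pre post (last xs) y > 0 \<and> b = y \<and>
     (case last xs of Inl s \<Rightarrow> faithful post Tp Sp s | Inr t \<Rightarrow> t \<in> Tp)"
proof -
  obtain n where n: "length xs = Suc n" using assms by (cases xs) auto
  have "(\<forall>i < length (xs@[y]) - 1. P ((xs@[y]) ! i)) \<longleftrightarrow>
        (\<forall>i < length xs - 1. P (xs ! i)) \<and> P (last xs)" for P
    using n assms by (simp only: all_less_Suc_split length_append_singleton diff_Suc_1)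
       (simp add: nth_append last_conv_nth)
  then show ?thesis using assms unfolding faithful_path_def
    by (auto simp: is_path_snoc)
qed


lemma faithful_Sp:
  assumes "faithful post Tp Sp s" "s \<in> Sp" "t \<in> Tp"
  shows "post t s = 0"
proof (rule ccontr)
  assume c: "post t s \<noteq> 0"
  let ?A = "{t\<in>Tp. post t s \<noteq> 0}"
  have fin: "finite ?A" and eq: "(\<Sum>t\<in>?A. post t s) = 0"
    using assms(1,2) unfolding faithful_def by auto
  have "t \<in> ?A" using c assms(3) by auto
  then have "post t s \<le> (\<Sum>t\<in>?A. post t s)" using fin by (intro member_le_sum) auto
  then show False using eq c by simp
qed

lemma faithful_producer:
  assumes "faithful post Tp Sp s" "t0 \<in> Tp" "post t0 s > 0"
  shows "s \<notin> Sp \<and> post t0 s = 1 \<and> (\<forall>t\<in>Tp. t \<noteq> t0 \<longrightarrow> post t s = 0)"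
proof -
  have nS: "s \<notin> Sp" using faithful_Sp[OF assms(1) _ assms(2)] assms(3) by auto
  let ?A = "{t\<in>Tp. post t s \<noteq> 0}"
  have fin: "finite ?A" and eq: "(\<Sum>t\<in>?A. post t s) = 1"
    using assms(1) nS unfolding faithful_def by auto
  have t0A: "t0 \<in> ?A" using assms by auto
  have split: "(\<Sum>t\<in>?A. post t s) = post t0 s + (\<Sum>t\<in>?A - {t0}. post t s)"
    using fin t0A by (rule sum.remove)
  have p1: "post t0 s = 1" using split eq assms(3) by linarith
  have rest: "(\<Sum>t\<in>?A - {t0}. post t s) = 0" using split eq p1 by linarith
  have "\<forall>t\<in>Tp. t \<noteq> t0 \<longrightarrow> post t s = 0"
  proof (intro ballI impI)
    fix t assume "t \<in> Tp" "t \<noteq> t0"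
    show "post t s = 0"
    proof (rule ccontr)
      assume c: "post t s \<noteq> 0"
      then have "t \<in> ?A - {t0}" using \<open>t \<in> Tp\<close> \<open>t \<noteq> t0\<close> by auto
      then have "post t s \<le> (\<Sum>t\<in>?A - {t0}. post t s)" using fin by (intro member_le_sum) auto
      then show False using rest c by simp
    qed
  qed
  then show ?thesis using nS p1 by auto
qed

lemma postset_single:
  assumes "set_mset H \<subseteq> Tp" "post t0 s = 1" "\<forall>t\<in>Tp. t \<noteq> t0 \<longrightarrow> post t s = 0"
  shows "postset_ms post H s = count H t0"
  using assms(1) unfolding postset_ms_def
proof (induction H)
  case empty then show ?case by simp
next
  case (add x H) then show ?case using assms(2,3) by (cases "x = t0") auto
qed

lemma postset_zero:
  assumes "set_mset H \<subseteq> Tp" "\<forall>t\<in>Tp. post t s = 0"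
  shows "postset_ms post H s = 0"
  using assms(1) unfolding postset_ms_def
proof (induction H)
  case empty then show ?case by simp
next
  case (add x H) then show ?case using assms(2) by auto
qed

lemma preset_count: "count H t * pre s t \<le> preset_ms pre H s"
  unfolding preset_ms_def
proof (induction H)
  case empty then show ?case by simp
next
  case (add x H) then show ?case by (cases "x = t") auto
qed

lemma path_bound:
  assumes Mbar_supp: "\<forall>s. s \<notin> Sp \<longrightarrow> Mbar s = 0"
    and H_supp: "set_mset H \<subseteq> Tp"
    and nonneg: "\<forall>s. int (Mbar s) + effect pre post H s \<ge> 0"
  shows "faithful_path pre post Tp Sp xs (Inl s') (Inl s) \<Longrightarrow> s' \<in> Sp \<Longrightarrow> faithful post Tp Sp s
    \<Longrightarrow> (Mbar s + postset_ms post H s) * path_weight (flow pre post) xs \<le> Mbar s'"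
proof (induction "length xs" arbitrary: xs s rule: less_induct)
  case less
  have "xs \<noteq> []" using less.prems unfolding faithful_path_def is_path_def by auto
  then obtain ys y where xs: "xs = ys @ [y]" by (cases xs rule: rev_cases) auto
  show ?case
  proof (cases "ys = []")
    case True
    then have "xs = [y]" using xs by simp
    then have y: "y = Inl s" "y = Inl s'" using less.prems unfolding faithful_path_def by auto
    then have ss: "s = s'" by simp
    have "\<forall>t\<in>Tp. post t s = 0" using faithful_Sp[OF less.prems(3)] less.prems(2) ss by auto
    then have "postset_ms post H s = 0" by (rule postset_zero[OF H_supp])
    moreover have "path_weight (flow pre post) xs = 1"
      using \<open>xs = [y]\<close> unfolding path_weight_def by simp
    ultimately show ?thesis using ss by simp
  next
    case False
    have fp: "faithful_path pre post Tp Sp ys (Inl s') (last ys)"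
      and fl: "flow pre post (last ys) y > 0" and yb: "Inl s = y"
      and c1: "(case last ys of Inl s \<Rightarrow> faithful post Tp Sp s | Inr t \<Rightarrow> t \<in> Tp)"
      using less.prems(1) faithful_path_snoc[OF False] unfolding xs by auto
    obtain t0 where lt: "last ys = Inr t0"
      using fl yb by (cases "last ys") auto
    have t0: "t0 \<in> Tp" using c1 lt by simp
    have pt0: "post t0 s > 0" using fl yb lt by auto
    have ys_ne: "ys \<noteq> [Inr t0]" using fp unfolding faithful_path_def by auto
    obtain zs where ys: "ys = zs @ [Inr t0]" using False lt by (cases ys rule: rev_cases) auto
    have zs_ne: "zs \<noteq> []" using ys ys_ne by auto
    have fpz: "faithful_path pre post Tp Sp zs (Inl s') (last zs)"
      and fl2: "flow pre post (last zs) (Inr t0) > 0"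
      and c2: "(case last zs of Inl s \<Rightarrow> faithful post Tp Sp s | Inr t \<Rightarrow> t \<in> Tp)"
      using fp faithful_path_snoc[OF zs_ne] unfolding ys by auto
    obtain s'' where lz: "last zs = Inl s''" using fl2 by (cases "last zs") auto
    have fs'': "faithful post Tp Sp s''" using c2 lz by simp
    have IH: "(Mbar s'' + postset_ms post H s'') * path_weight (flow pre post) zs \<le> Mbar s'"
      using less.hyps[of zs s''] fpz lz less.prems(2) fs'' xs ys by auto
    have fpr: "s \<notin> Sp \<and> post t0 s = 1 \<and> (\<forall>t\<in>Tp. t \<noteq> t0 \<longrightarrow> post t s = 0)"
      using faithful_producer[OF less.prems(3) t0 pt0] .
    have Ps: "Mbar s + postset_ms post H s = count H t0"
      using fpr postset_single[OF H_supp] Mbar_supp by auto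
    have w: "path_weight (flow pre post) xs = path_weight (flow pre post) zs * pre s'' t0"
      using path_weight_snoc[OF zs_ne, of "flow pre post" "Inr t0"]
        path_weight_snoc[of ys "flow pre post" y] False xs ys lz lt yb[symmetric] fpr by simp
    have pre_le: "preset_ms pre H s'' \<le> Mbar s'' + postset_ms post H s''"
      using nonneg[rule_format, of s''] unfolding effect_def by simp
    have "count H t0 * pre s'' t0 \<le> Mbar s'' + postset_ms post H s''"
      using preset_count[of H t0 pre s''] pre_le by linarith
    then have "count H t0 * pre s'' t0 * path_weight (flow pre post) zs
       \<le> (Mbar s'' + postset_ms post H s'') * path_weight (flow pre post) zs"
      by (rule mult_right_mono) simp
    then have c: "count H t0 * pre s'' t0 * path_weight (flow pre post) zs \<le> Mbar s'"
      using IH by (rule order_trans)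
    have "(Mbar s + postset_ms post H s) * path_weight (flow pre post) xs
        = count H t0 * pre s'' t0 * path_weight (flow pre post) zs" by (simp add: Ps w)
    then show ?thesis using c by simp
  qed
qed

lemma enat_Sup_bound:
  fixes A :: "enat set"
  assumes "\<forall>a\<in>A. enat m * a \<le> enat c"
  shows "enat m * Sup A \<le> enat c"
proof (cases "m = 0")
  case True then show ?thesis by (simp add: zero_enat_def[symmetric])
next
  case False
  have le: "a \<le> enat c" if "a \<in> A" for a
  proof -
    have "a \<le> enat m * a" using False by (cases a) auto
    then show ?thesis using assms that by (meson order_trans)
  qed
  then have fin: "finite A" by (rule finite_enat_bounded)
  show ?thesis
  proof (cases "A = {}")
    case True then show ?thesis by (simp add: bot_enat_def)
  next
    case ne: False
    have "Sup A \<in> A" using fin ne by (simp add: Sup_enat_def Max_in)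
    then show ?thesis using assms by auto
  qed
qed

theorem lemma6p7:
  fixes pre :: "'s \<Rightarrow> 't \<Rightarrow> nat" and post :: "'t \<Rightarrow> 's \<Rightarrow> nat"
    and Tp :: "'t set" and Sp :: "'s set"
    and Mbar :: "'s \<Rightarrow> nat" and H :: "'t multiset"
  assumes acyc: "acyclic_on pre post Tp"
    and Mbar_supp: "\<forall>s. s \<notin> Sp \<longrightarrow> Mbar s = 0"
    and H_supp: "set_mset H \<subseteq> Tp"
    and nonneg: "\<forall>s. int (Mbar s) + effect pre post H s \<ge> 0"
  defines "M \<equiv> (\<lambda>s. nat (int (Mbar s) + effect pre post H s))"
  shows "(\<forall>s. faithful post Tp Sp s \<longrightarrow>
            (\<forall>s'. enat (M s) * star pre post Tp Sp (Inl s) s' \<le> enat (Mbar s')))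
       \<and> (\<forall>(k::nat) t. enabled pre M (replicate_mset k t) \<longrightarrow>
            (\<forall>s'. enat k * star pre post Tp Sp (Inr t) s' \<le> enat (Mbar s')))"
proof -
  have MP: "M s \<le> Mbar s + postset_ms post H s" for s
    unfolding M_def effect_def by simp
  note pb = path_bound[OF Mbar_supp H_supp nonneg]
  have A: "enat (M s) * star pre post Tp Sp (Inl s) s' \<le> enat (Mbar s')"
    if fs: "faithful post Tp Sp s" for s s'
    unfolding star_def
  proof (rule enat_Sup_bound, safe)
    fix xs assume "s' \<in> Sp" "faithful_path pre post Tp Sp xs (Inl s') (Inl s)"
    then have "(Mbar s + postset_ms post H s) * path_weight (flow pre post) xs \<le> Mbar s'"
      using pb fs by blast
    moreover have "M s * path_weight (flow pre post) xs
        \<le> (Mbar s + postset_ms post H s) * path_weight (flow pre post) xs"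
      using MP by (rule mult_right_mono) simp
    ultimately have "M s * path_weight (flow pre post) xs \<le> Mbar s'" by (rule order_trans[rotated])
    then show "enat (M s) * enat (path_weight (flow pre post) xs) \<le> enat (Mbar s')"
      by simp
  qed
  have B: "enat k * star pre post Tp Sp (Inr t) s' \<le> enat (Mbar s')"
    if en: "enabled pre M (replicate_mset k t)" for k t s'
    unfolding star_def
  proof (rule enat_Sup_bound, safe)
    fix xs assume s'S: "s' \<in> Sp" and fp0: "faithful_path pre post Tp Sp xs (Inl s') (Inr t)"
    have "xs \<noteq> []" using fp0 unfolding faithful_path_def is_path_def by auto
    then obtain ys y where xs: "xs = ys @ [y]" by (cases xs rule: rev_cases) auto
    have ys_ne: "ys \<noteq> []" using xs fp0 unfolding faithful_path_def by auto
    have fp: "faithful_path pre post Tp Sp ys (Inl s') (last ys)"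
      and fl: "flow pre post (last ys) y > 0" and yb: "Inr t = y"
      and c1: "(case last ys of Inl s \<Rightarrow> faithful post Tp Sp s | Inr t \<Rightarrow> t \<in> Tp)"
      using fp0 faithful_path_snoc[OF ys_ne] unfolding xs by auto
    obtain s'' where lt: "last ys = Inl s''" using fl yb by (cases "last ys") auto
    have fs: "faithful post Tp Sp s''" using c1 lt by simp
    have w: "path_weight (flow pre post) xs = path_weight (flow pre post) ys * pre s'' t"
      using path_weight_snoc[OF ys_ne] xs lt yb by auto
    have IH: "(Mbar s'' + postset_ms post H s'') * path_weight (flow pre post) ys \<le> Mbar s'"
      using pb fp lt s'S fs by auto
    have "preset_ms pre (replicate_mset k t) s'' \<le> M s''" using en unfolding enabled_def by blast
    moreover have "preset_ms pre (replicate_mset k t) s'' = k * pre s'' t"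
      unfolding preset_ms_def by (induction k) auto
    ultimately have "k * pre s'' t \<le> Mbar s'' + postset_ms post H s''" using MP[of s''] by linarith
    then have "k * pre s'' t * path_weight (flow pre post) ys
       \<le> (Mbar s'' + postset_ms post H s'') * path_weight (flow pre post) ys"
      by (rule mult_right_mono) simp
    then have "k * pre s'' t * path_weight (flow pre post) ys \<le> Mbar s'"
      using IH by (rule order_trans)
    moreover have "k * path_weight (flow pre post) xs = k * pre s'' t * path_weight (flow pre post) ys"
      using w by simp
    ultimately have "k * path_weight (flow pre post) xs \<le> Mbar s'" by (simp only:)
    then show "enat k * enat (path_weight (flow pre post) xs) \<le> enat (Mbar s')" by simp
  qed
  show ?thesis using A B by blast
qed

end
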